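(* Let $X$ be a complete separable metric space, identified with its image under a fixed isometric embedding $\iota:X\to\ell_\infty(\mathbb{N})$. Let $(K_n)_{n\in\mathbb{N}}$ be a sequence of non-empty compact subsets of $X$ with $K_n\subset K_m$ for $n\le m$, let $M,L,\Delta>0$, and let $h_n:\ell_\infty(\mathbb{N})\to[0,\infty)$, $h_n(x)=\sum_{k=1}^n\min\{n\,d(x,K_k),1\}$. If $(P^i=(p^i_0,\dots,p^i_{n(i)}))_{i\in\mathbb{N}}$ is a sequence of discrete paths in $X$ with $\lim_{i\to\infty}\mathrm{Mesh}(P^i)=0$, $\mathrm{Len}(P^i)\le L$, $\mathrm{diam}(P^i)\ge\Delta$ and $\sum_{k=0}^{n(i)-1}h_i(p^i_k)d(p^i_k,p^i_{k+1})\le M$ for every $i$, then a subsequence of $(P^i)$ converges to a curve $\gamma:[0,1]\to X$.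
   Context: A discrete path is a sequence $P=(p_0,\dots,p_n)$ of points of $X$ with $n\ge1$; $\mathrm{Mesh}(P)=\max_{k\le n-1}d(p_k,p_{k+1})$, $\mathrm{diam}(P)=\max_{k,l}d(p_k,p_l)$, $\mathrm{Len}(P)=\sum_{k=0}^{n-1}d(p_k,p_{k+1})$. Distances $d(x,K)=\inf_{a\in K}d(x,a)$ are taken in $\ell_\infty(\mathbb{N})$. The linearly interpolating curve $\gamma_P:[0,1]\to\ell_\infty(\mathbb{N})$ is constant $p_0$ if $\mathrm{Len}(P)=0$; otherwise with $t_0=0$, $t_k=\sum_{i=0}^{k-1}d(p_i,p_{i+1})/\mathrm{Len}(P)$, $\gamma_P(t_k)=p_k$ and $\gamma_P$ is affine on each $[t_k,t_{k+1}]$ with $t_k<t_{k+1}$. A sequence of discrete paths $P^i$ converges to a curve $\gamma:[0,1]\to X$ if $\gamma_{P^i}\to\gamma$ uniformly and $\mathrm{Mesh}(P^i)\to0$. *)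

theory Defs
  imports "HOL-Analysis.Analysis"
begin

text \<open>The space l_infty(N) of bounded real sequences, realised as bounded
  (automatically continuous, N being discrete) functions nat to real.\<close>
type_synonym linf = "nat \<Rightarrow>\<^sub>C real"

text \<open>A discrete path P = (p_0,...,p_n) is given by a function p and its
  last index n (with n >= 1).\<close>

definition Mesh :: "(nat \<Rightarrow> linf) \<Rightarrow> nat \<Rightarrow> real" where
  "Mesh p n = Max {dist (p k) (p (Suc k)) | k. k < n}"

definition pdiam :: "(nat \<Rightarrow> linf) \<Rightarrow> nat \<Rightarrow> real" where
  "pdiam p n = Max {dist (p k) (p l) | k l. k \<le> n \<and> l \<le> n}"

definition Len :: "(nat \<Rightarrow> linf) \<Rightarrow> nat \<Rightarrow> real" where
  "Len p n = (\<Sum>k<n. dist (p k) (p (Suc k)))"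

definition tpar :: "(nat \<Rightarrow> linf) \<Rightarrow> nat \<Rightarrow> nat \<Rightarrow> real" where
  "tpar p n k = (\<Sum>i<k. dist (p i) (p (Suc i))) / Len p n"

definition gammaP :: "(nat \<Rightarrow> linf) \<Rightarrow> nat \<Rightarrow> real \<Rightarrow> linf" where
  "gammaP p n t =
     (if Len p n = 0 then p 0
      else (let k = (GREATEST k. k < n \<and> tpar p n k \<le> t \<and> tpar p n k < tpar p n (Suc k))
            in p k + ((t - tpar p n k) / (tpar p n (Suc k) - tpar p n k)) *\<^sub>R (p (Suc k) - p k)))"

definition hfun :: "(nat \<Rightarrow> linf set) \<Rightarrow> nat \<Rightarrow> linf \<Rightarrow> real" where
  "hfun K m x = (\<Sum>k=1..m. min (real m * infdist x (K k)) 1)"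

end

theory Submission
  imports Defs "HOL-Complex_Analysis.Great_Picard"
begin

lemma tpar_Suc: "tpar p n (Suc k) = tpar p n k + dist (p k) (p (Suc k)) / Len p n"
  by (simp add: tpar_def add_divide_distrib)

lemma tpar_diff: "a \<le> b \<Longrightarrow> tpar p n b - tpar p n a = (\<Sum>l\<in>{a..<b}. dist (p l) (p (Suc l))) / Len p n"
proof (induction b)
  case 0 then show ?case by simp
next
  case (Suc b)
  show ?case
  proof (cases "a = Suc b")
    case True then show ?thesis by simp
  next
    case False
    then have "a \<le> b" using Suc by simp
    then show ?thesis using Suc by (simp add: tpar_Suc add_divide_distrib)
  qed
qed

lemma tpar_mono: "a \<le> b \<Longrightarrow> tpar p n a \<le> tpar p n b"
proof -
  assume "a \<le> b"
  have "0 \<le> Len p n" unfolding Len_def by (simp add: sum_nonneg)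
  then have "0 \<le> (\<Sum>l\<in>{a..<b}. dist (p l) (p (Suc l))) / Len p n" by (simp add: sum_nonneg)
  with tpar_diff[OF \<open>a \<le> b\<close>, of p n] show ?thesis by simp
qed

lemma tpar_0 [simp]: "tpar p n 0 = 0" by (simp add: tpar_def)

lemma tpar_n: "Len p n > 0 \<Longrightarrow> tpar p n n = 1"
  by (simp add: tpar_def Len_def)

lemma dist_sum: "a \<le> b \<Longrightarrow> dist (p a) (p b) \<le> (\<Sum>l\<in>{a..<b}. dist (p l) (p (Suc l)))"
proof (induction b)
  case 0 then show ?case by simp
next
  case (Suc b)
  show ?case
  proof (cases "a = Suc b")
    case True then show ?thesis by simp
  next
    case False
    then have "a \<le> b" using Suc by simp
    then show ?thesis using Suc dist_triangle[of "p a" "p (Suc b)" "p b"]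
      by (simp add: dist_commute)
  qed
qed

lemma first_pos:
  fixes d :: "nat \<Rightarrow> real"
  shows "a \<le> b \<Longrightarrow> 0 < (\<Sum>l\<in>{a..<b}. d l) \<Longrightarrow> (\<And>l. 0 \<le> d l) \<Longrightarrow>
    \<exists>l. a \<le> l \<and> l < b \<and> 0 < d l \<and> (\<Sum>l\<in>{a..<l}. d l) = 0"
proof (induction b)
  case 0 then show ?case by simp
next
  case (Suc b)
  show ?case
  proof (cases "a = Suc b")
    case True then show ?thesis using Suc by simp
  next
    case False
    then have ab: "a \<le> b" using Suc by simp
    show ?thesis
    proof (cases "0 < (\<Sum>l\<in>{a..<b}. d l)")
      case True
      then show ?thesis using Suc ab by (meson less_SucI)
    next
      case False
      then have "(\<Sum>l\<in>{a..<b}. d l) = 0" using Suc.prems(3) by (meson antisym not_less sum_nonneg)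
      then show ?thesis using Suc ab by auto
    qed
  qed
qed

definition seg :: "(nat \<Rightarrow> linf) \<Rightarrow> nat \<Rightarrow> nat \<Rightarrow> real \<Rightarrow> linf" where
  "seg p n k t = p k + ((t - tpar p n k) / (tpar p n (Suc k) - tpar p n k)) *\<^sub>R (p (Suc k) - p k)"

lemma gammaP_seg:
  assumes Lp: "Len p n > 0" and t: "0 \<le> t" "t \<le> 1"
  shows "\<exists>k<n. tpar p n k \<le> t \<and> t \<le> tpar p n (Suc k) \<and> tpar p n k < tpar p n (Suc k) \<and>
           gammaP p n t = seg p n k t"
proof -
  let ?T = "tpar p n"
  let ?d = "\<lambda>k. dist (p k) (p (Suc k))"
  let ?P = "\<lambda>k. k < n \<and> ?T k \<le> t \<and> ?T k < ?T (Suc k)"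
  have lt_iff: "?T k < ?T (Suc k) \<longleftrightarrow> 0 < ?d k" for k
    using Lp by (simp add: tpar_Suc zero_less_divide_iff)
  have "0 < (\<Sum>l\<in>{0..<n}. ?d l)" using Lp by (simp add: Len_def atLeast0LessThan)
  then obtain l where l: "l < n" "0 < ?d l" "(\<Sum>l\<in>{0..<l}. ?d l) = 0"
    using first_pos[of 0 n ?d] by auto
  then have "?T l = 0" by (simp add: tpar_def atLeast0LessThan)
  moreover have "?T l < ?T (Suc l)" using lt_iff l(2) by blast
  ultimately have Pl: "?P l" using l t by simp
  define k where "k = (GREATEST k. ?P k)"
  have Pk: "?P k" unfolding k_def by (rule GreatestI_nat[of _ l n]) (use Pl in auto)
  have kmax: "?P j \<Longrightarrow> j \<le> k" for j unfolding k_def by (rule Greatest_le_nat[of _ _ n]) auto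
  have "t \<le> ?T (Suc k)"
  proof (rule ccontr)
    assume "\<not> t \<le> ?T (Suc k)"
    then have lt: "?T (Suc k) < t" by simp
    have sk: "Suc k \<le> n" using Pk by simp
    have "?T n - ?T (Suc k) > 0" using lt t tpar_n[OF Lp] by simp
    then have "0 < (\<Sum>l\<in>{Suc k..<n}. ?d l)" using tpar_diff[OF sk, of p] Lp
      by (simp add: zero_less_divide_iff)
    then obtain j where j: "Suc k \<le> j" "j < n" "0 < ?d j" "(\<Sum>l\<in>{Suc k..<j}. ?d l) = 0"
      using first_pos[OF sk, of ?d] by auto
    then have "?T j = ?T (Suc k)" using tpar_diff[OF j(1), of p n] by simp
    moreover have "?T j < ?T (Suc j)" using lt_iff j(3) by blast
    ultimately have "?P j" using j lt by simp
    then show False using kmax j by fastforce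
  qed
  then show ?thesis using Pk Lp
    unfolding gammaP_def seg_def Let_def k_def by auto
qed

lemma seg_dist:
  assumes Lp: "Len p n > 0" and lt: "tpar p n k < tpar p n (Suc k)"
  shows "dist (seg p n k s) (seg p n k t) = Len p n * \<bar>s - t\<bar>"
proof -
  let ?D = "tpar p n (Suc k) - tpar p n k"
  have D: "?D = dist (p k) (p (Suc k)) / Len p n" by (simp add: tpar_Suc)
  have dpos: "dist (p k) (p (Suc k)) > 0" using lt Lp by (simp add: tpar_Suc zero_less_divide_iff)
  have "seg p n k s - seg p n k t = ((s - t) / ?D) *\<^sub>R (p (Suc k) - p k)"
    unfolding seg_def by (simp add: diff_divide_distrib scaleR_diff_left)
  then have "dist (seg p n k s) (seg p n k t) = \<bar>s - t\<bar> / ?D * dist (p k) (p (Suc k))"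
    using lt by (simp add: dist_norm norm_minus_commute)
  also have "\<dots> = Len p n * \<bar>s - t\<bar>"
    using dpos Lp unfolding D by (auto simp: field_simps)
  finally show ?thesis .
qed

lemma seg_left [simp]: "seg p n k (tpar p n k) = p k" by (simp add: seg_def)
lemma seg_right: "tpar p n k < tpar p n (Suc k) \<Longrightarrow> seg p n k (tpar p n (Suc k)) = p (Suc k)"
  by (simp add: seg_def)

lemma gammaP_lip:
  assumes Lp: "Len p n > 0" and s: "0 \<le> s" "s \<le> 1" and t: "0 \<le> t" "t \<le> 1"
  shows "dist (gammaP p n s) (gammaP p n t) \<le> Len p n * \<bar>s - t\<bar>"
proof -
  have main: "dist (gammaP p n s) (gammaP p n t) \<le> Len p n * \<bar>s - t\<bar>"
    if Lp: "Len p n > 0" and s: "0 \<le> s" "s \<le> 1" and t: "0 \<le> t" "t \<le> 1" and st: "s < t" for s t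
  proof -
    let ?T = "tpar p n"
    obtain a where a: "a < n" "?T a \<le> s" "s \<le> ?T (Suc a)" "?T a < ?T (Suc a)" "gammaP p n s = seg p n a s"
      using gammaP_seg[OF Lp s] by blast
    obtain b where b: "b < n" "?T b \<le> t" "t \<le> ?T (Suc b)" "?T b < ?T (Suc b)" "gammaP p n t = seg p n b t"
      using gammaP_seg[OF Lp t] by blast
    consider "a = b" | "a < b" | "b < a" by linarith
    then show ?thesis
    proof cases
      case 1 then show ?thesis using a b seg_dist[OF Lp a(4)] by simp
    next
      case 2
      then have ab: "Suc a \<le> b" by simp
      have "dist (gammaP p n s) (gammaP p n t) \<le> dist (seg p n a s) (seg p n a (?T (Suc a)))
           + dist (p (Suc a)) (p b) + dist (seg p n b (?T b)) (seg p n b t)"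
        using a b seg_right[OF a(4)] dist_triangle[of "seg p n a s" "seg p n b t" "p (Suc a)"]
          dist_triangle[of "p (Suc a)" "seg p n b t" "p b"] by simp
      also have "\<dots> \<le> Len p n * (?T (Suc a) - s) + Len p n * (?T b - ?T (Suc a)) + Len p n * (t - ?T b)"
      proof -
        have "dist (p (Suc a)) (p b) \<le> (\<Sum>l\<in>{Suc a..<b}. dist (p l) (p (Suc l)))"
          by (rule dist_sum[OF ab])
        also have "\<dots> = Len p n * (?T b - ?T (Suc a))"
          using tpar_diff[OF ab, of p n] Lp by simp
        finally have 1: "dist (p (Suc a)) (p b) \<le> Len p n * (?T b - ?T (Suc a))" .
        have 2: "dist (seg p n a s) (seg p n a (?T (Suc a))) = Len p n * (?T (Suc a) - s)"
          using seg_dist[OF Lp a(4), of s "?T (Suc a)"] a by simp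
        have 3: "dist (seg p n b (?T b)) (seg p n b t) = Len p n * (t - ?T b)"
          using seg_dist[OF Lp b(4), of "?T b" t] b by simp
        show ?thesis using 1 2 3 by linarith
      qed
      also have "\<dots> = Len p n * \<bar>s - t\<bar>" using st by (simp add: algebra_simps)
      finally show ?thesis .
    next
      case 3
      then have "?T (Suc b) \<le> ?T a" by (intro tpar_mono) simp
      then show ?thesis using a b st by linarith
    qed
  qed
  consider "s < t" | "s = t" | "t < s" by linarith
  then show ?thesis
  proof cases
    case 3 then show ?thesis using main[OF Lp t s] by (simp add: dist_commute abs_minus_commute)
  qed (use main[OF Lp s t] in auto)
qed

lemma gammaP_near:
  assumes Lp: "Len p n > 0" and t: "0 \<le> t" "t \<le> 1"
  shows "\<exists>k<n. dist (gammaP p n t) (p k) \<le> dist (p k) (p (Suc k))"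
proof -
  obtain k where k: "k < n" "tpar p n k \<le> t" "t \<le> tpar p n (Suc k)" "tpar p n k < tpar p n (Suc k)"
     "gammaP p n t = seg p n k t"
    using gammaP_seg[OF Lp t] by blast
  have "dist (gammaP p n t) (p k) = Len p n * (t - tpar p n k)"
    using seg_dist[OF Lp k(4), of t "tpar p n k"] k by simp
  also have "\<dots> \<le> Len p n * (tpar p n (Suc k) - tpar p n k)"
    using k Lp by (intro mult_left_mono) auto
  also have "\<dots> = dist (p k) (p (Suc k))" using Lp by (simp add: tpar_Suc)
  finally show ?thesis using k by blast
qed

lemma Mesh_ge: "k < n \<Longrightarrow> dist (p k) (p (Suc k)) \<le> Mesh p n"
  unfolding Mesh_def by (rule Max_ge) auto

lemma pdiam_le_Len: "pdiam p n \<le> Len p n"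
proof -
  have fin: "finite {dist (p k) (p l) | k l. k \<le> n \<and> l \<le> n}"
  proof -
    have "{dist (p k) (p l) | k l. k \<le> n \<and> l \<le> n} = (\<lambda>(k,l). dist (p k) (p l)) ` ({..n} \<times> {..n})"
      by auto
    then show ?thesis by simp
  qed
  have ne: "{dist (p k) (p l) | k l. k \<le> n \<and> l \<le> n} \<noteq> {}" by auto
  have le: "dist (p k) (p l) \<le> Len p n" if "k \<le> n" "l \<le> n" "k \<le> l" for k l
  proof -
    have "dist (p k) (p l) \<le> (\<Sum>i\<in>{k..<l}. dist (p i) (p (Suc i)))" by (rule dist_sum[OF that(3)])
    also have "\<dots> \<le> (\<Sum>i\<in>{..<n}. dist (p i) (p (Suc i)))"
      using that by (intro sum_mono2) auto
    finally show ?thesis by (simp add: Len_def)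
  qed
  show ?thesis unfolding pdiam_def
    using fin ne le by (auto simp: Max_le_iff) (metis dist_commute le nle_le)
qed

lemma tight:
  fixes p :: "nat \<Rightarrow> linf" and h :: "nat \<Rightarrow> real" and C :: "linf set" and m :: real
  assumes mpos: "m > 0" and hnn: "\<And>k. 0 \<le> h k"
    and far: "\<And>k. k < n \<Longrightarrow> e \<le> infdist (p k) C \<Longrightarrow> m \<le> h k"
    and hb: "(\<Sum>k<n. h k * dist (p k) (p (Suc k))) \<le> M"
    and Lbig: "M / m < Len p n"
    and k: "k \<le> n"
  shows "infdist (p k) C \<le> e + Mesh p n + M / m"
proof -
  let ?d = "\<lambda>k. dist (p k) (p (Suc k))"
  define F where "F = {k. k < n \<and> e \<le> infdist (p k) C}"
  have farsum: "(\<Sum>l\<in>A. ?d l) \<le> M/m" if A: "A \<subseteq> F" for A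
  proof -
    have fA: "finite A" using A unfolding F_def by (intro finite_subset[OF _ finite_lessThan[of n]]) auto
    have "m * (\<Sum>l\<in>A. ?d l) = (\<Sum>l\<in>A. m * ?d l)" by (simp add: sum_distrib_left)
    also have "\<dots> \<le> (\<Sum>l\<in>A. h l * ?d l)"
      using A far unfolding F_def by (intro sum_mono mult_right_mono) auto
    also have "\<dots> \<le> (\<Sum>l<n. h l * ?d l)"
      using A hnn unfolding F_def by (intro sum_mono2) auto
    also have "\<dots> \<le> M" by (rule hb)
    finally show ?thesis using mpos by (simp add: pos_le_divide_eq mult.commute)
  qed
  have Mm: "0 \<le> M/m" using farsum[of "{}"] by simp
  have "\<exists>j<n. infdist (p j) C < e"
  proof (rule ccontr)
    assume "\<not> ?thesis"
    then have "{..<n} \<subseteq> F" unfolding F_def by auto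
    then have "Len p n \<le> M/m" using farsum unfolding Len_def by blast
    then show False using Lbig by simp
  qed
  then obtain j1 where j1: "j1 < n" "infdist (p j1) C < e" by blast
  show ?thesis
  proof (cases "\<exists>j. j < n \<and> j \<le> k \<and> infdist (p j) C < e")
    case True
    define N where "N = {j. j < n \<and> j \<le> k \<and> infdist (p j) C < e}"
    have finN: "finite N" by (rule finite_subset[OF _ finite_lessThan[of n]]) (auto simp: N_def)
    have neN: "N \<noteq> {}" using True unfolding N_def by auto
    define j0 where "j0 = Max N"
    have j0N: "j0 \<in> N" unfolding j0_def using finN neN by (rule Max_in)
    have j0max: "j \<in> N \<Longrightarrow> j \<le> j0" for j unfolding j0_def using finN by simp
    have j0: "j0 < n" "j0 \<le> k" "infdist (p j0) C < e" using j0N unfolding N_def by auto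
    have "dist (p j0) (p k) \<le> Mesh p n + M/m"
    proof (cases "j0 = k")
      case True then show ?thesis using Mesh_ge[OF j0(1), of p] Mm zero_le_dist[of "p j0" "p (Suc j0)"] by (smt (verit) dist_self)
    next
      case False
      then have lt: "j0 < k" using j0 by simp
      have "dist (p j0) (p k) \<le> (\<Sum>l\<in>{j0..<k}. ?d l)" using dist_sum j0 by blast
      also have "\<dots> = ?d j0 + (\<Sum>l\<in>{Suc j0..<k}. ?d l)"
        using lt by (simp add: sum.atLeast_Suc_lessThan)
      also have "\<dots> \<le> Mesh p n + M/m"
      proof (intro add_mono Mesh_ge j0 farsum)
        show "{Suc j0..<k} \<subseteq> F"
        proof
          fix l assume l: "l \<in> {Suc j0..<k}"
          then have "l \<notin> N" using j0max by fastforce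
          then show "l \<in> F" using l k unfolding N_def F_def by auto
        qed
      qed
      finally show ?thesis .
    qed
    then show ?thesis using infdist_triangle[of "p k" C "p j0"] j0 by (simp add: dist_commute)
  next
    case False
    define N where "N = {j. j < n \<and> infdist (p j) C < e}"
    have finN: "finite N" by (rule finite_subset[OF _ finite_lessThan[of n]]) (auto simp: N_def)
    have neN: "N \<noteq> {}" using j1 unfolding N_def by auto
    define j0 where "j0 = Min N"
    have j0N: "j0 \<in> N" unfolding j0_def using finN neN by (rule Min_in)
    have j0min: "j \<in> N \<Longrightarrow> j0 \<le> j" for j unfolding j0_def using finN by simp
    have j0: "j0 < n" "infdist (p j0) C < e" using j0N unfolding N_def by auto
    have kj: "k \<le> j0" using False j0 by (meson nat_le_linear)
    have "dist (p k) (p j0) \<le> (\<Sum>l\<in>{k..<j0}. ?d l)" using dist_sum kj by blast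
    also have "\<dots> \<le> M/m"
    proof (intro farsum)
      show "{k..<j0} \<subseteq> F"
      proof
        fix l assume l: "l \<in> {k..<j0}"
        then have "l \<notin> N" using j0min by fastforce
        then show "l \<in> F" using l j0 unfolding N_def F_def by auto
      qed
    qed
    finally have "dist (p k) (p j0) \<le> M/m" .
    moreover have "0 \<le> Mesh p n" using Mesh_ge[OF j0(1), of p] zero_le_dist[of "p j0" "p (Suc j0)"] by linarith
    ultimately show ?thesis using infdist_triangle[of "p k" C "p j0"] j0 by simp
  qed
qed

lemma coloring_subseq:
  fixes f :: "nat \<Rightarrow> 'x \<Rightarrow> 'a::metric_space" and col :: "nat \<Rightarrow> nat \<Rightarrow> 'c"
  assumes fin: "\<And>m. finite (range (col m))"
    and close: "\<And>m. \<exists>I. \<forall>i\<ge>I. \<forall>i'\<ge>I. col m i = col m i' \<longrightarrow> (\<forall>t\<in>S. dist (f i t) (f i' t) \<le> 1 / Suc m)"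
  shows "\<exists>r. strict_mono r \<and> uniformly_Cauchy_on S (\<lambda>j. f (r j))"
proof -
  obtain I where I: "\<And>m i i' t. i \<ge> I m \<Longrightarrow> i' \<ge> I m \<Longrightarrow> col m i = col m i' \<Longrightarrow> t \<in> S \<Longrightarrow> dist (f i t) (f i' t) \<le> 1 / Suc m"
    using close by metis
  define P where "P = (\<lambda>m (s :: nat \<Rightarrow> nat). \<exists>N. \<forall>j\<ge>N. \<forall>j'\<ge>N. col m (s j) = col m (s j'))"
  obtain k where k: "strict_mono k" "\<And>m. P m (id \<circ> k)"
  proof (rule subsequence_diagonalization_lemma[of P id])
    fix m and r :: "nat \<Rightarrow> nat"
    have "finite ((col m \<circ> r) ` UNIV)" using fin[of m] by (metis finite_subset image_comp image_mono top_greatest)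
    then obtain a0 where "infinite {a. (col m \<circ> r) a = (col m \<circ> r) a0}"
      using pigeonhole_infinite[of "UNIV :: nat set" "col m \<circ> r"] by auto
    then obtain q :: "nat \<Rightarrow> nat" where q: "strict_mono q" "\<And>j. q j \<in> {a. (col m \<circ> r) a = (col m \<circ> r) a0}"
      using infinite_enumerate by blast
    then have "P m (r \<circ> q)" unfolding P_def by (intro exI[of _ 0]) auto
    then show "\<exists>k. strict_mono k \<and> P m (r \<circ> k)" using q by blast
  next
    fix m and r :: "nat \<Rightarrow> nat" and k1 k2 :: "nat \<Rightarrow> nat" and N
    assume 1: "P m (r \<circ> k1)" and 2: "\<And>j. N \<le> j \<Longrightarrow> \<exists>j'. j \<le> j' \<and> k2 j = k1 j'"
    obtain N1 where N1: "\<And>j j'. j \<ge> N1 \<Longrightarrow> j' \<ge> N1 \<Longrightarrow> col m (r (k1 j)) = col m (r (k1 j'))"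
      using 1 unfolding P_def by auto
    show "P m (r \<circ> k2)" unfolding P_def
    proof (intro exI[of _ "max N N1"] allI impI)
      fix j j' assume j: "max N N1 \<le> j" and j': "max N N1 \<le> j'"
      obtain a where a: "j \<le> a" "k2 j = k1 a" using 2 j by auto
      obtain b where b: "j' \<le> b" "k2 j' = k1 b" using 2 j' by auto
      show "col m ((r \<circ> k2) j) = col m ((r \<circ> k2) j')" using N1[of a b] a b j j' by simp
    qed
  qed blast
  show ?thesis
  proof (intro exI[of _ k] conjI k(1) uniformly_Cauchy_onI)
    fix e :: real assume e: "e > 0"
    obtain m where m: "1 / Suc m < e" using e by (metis nat_approx_posE)
    obtain N where N: "\<And>j j'. j \<ge> N \<Longrightarrow> j' \<ge> N \<Longrightarrow> col m (k j) = col m (k j')"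
      using k(2)[of m] unfolding P_def by auto
    show "\<exists>M. \<forall>x\<in>S. \<forall>ma\<ge>M. \<forall>n\<ge>M. dist (f (k ma) x) (f (k n) x) < e"
    proof (intro exI[of _ "max N (I m)"] ballI allI impI)
      fix x j j' assume x: "x \<in> S" and j: "max N (I m) \<le> j" and j': "max N (I m) \<le> j'"
      have "k j \<ge> I m" "k j' \<ge> I m" using j j' seq_suble[OF k(1)] by (meson le_trans max.boundedE)+
      then have "dist (f (k j) x) (f (k j') x) \<le> 1 / Suc m" using I N j j' x by simp
      then show "dist (f (k j) x) (f (k j') x) < e" using m by linarith
    qed
  qed
qed

lemma infdist_lessE:
  assumes "A \<noteq> {}" "infdist x A < e"
  obtains a where "a \<in> A" "dist x a < e"
  using assms by (auto simp: infdist_notempty cINF_less_iff)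

lemma hfun_ge:
  assumes m1: "1 \<le> m" and mi: "m \<le> i" and K_mono: "\<And>a b. a \<le> b \<Longrightarrow> K a \<subseteq> K b"
    and K_ne: "\<And>a. K a \<noteq> {}" and ie: "1 \<le> real i * \<epsilon>"
    and far: "\<epsilon> \<le> infdist x (K m)"
  shows "real m \<le> hfun K i x"
proof -
  have "real m = (\<Sum>k=1..m. min (real i * infdist x (K k)) 1)"
  proof -
    have "min (real i * infdist x (K k)) 1 = 1" if "k \<in> {1..m}" for k
    proof -
      have "infdist x (K m) \<le> infdist x (K k)" using that K_mono K_ne by (intro infdist_mono) auto
      then have "real i * \<epsilon> \<le> real i * infdist x (K k)" using far by (intro mult_left_mono) auto
      then show ?thesis using ie by simp
    qed
    then show ?thesis by simp
  qed
  also have "\<dots> \<le> hfun K i x" unfolding hfun_def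
    using mi by (intro sum_mono2) (auto simp: infdist_nonneg)
  finally show ?thesis .
qed

lemma grid:
  assumes "0 \<le> t" "t \<le> 1" "N > 0"
  shows "\<exists>j\<le>N. \<bar>t - real j / real N\<bar> \<le> 1 / real N"
proof -
  define j where "j = nat \<lfloor>t * N\<rfloor>"
  have tN: "0 \<le> t * real N" using assms by simp
  have rj: "real j = of_int \<lfloor>t * real N\<rfloor>" using tN unfolding j_def by simp
  have "real j \<le> t * N" "t * N < real j + 1" unfolding rj by linarith+
  moreover have "t * real N \<le> real N" using assms by (simp add: mult_left_le_one_le)
  then have "real j \<le> real N" using \<open>real j \<le> t * N\<close> by linarith
  then have "j \<le> N" by simp
  moreover have "\<bar>t - real j / real N\<bar> = \<bar>t * N - real j\<bar> / real N"
    using assms by (simp add: field_simps)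
  moreover have "\<bar>t * N - real j\<bar> / real N \<le> 1 / real N"
    using calculation(1,2) by (intro divide_right_mono) auto
  ultimately show ?thesis by (intro exI[of _ j]) auto
qed

lemma linf_Cauchy_convergent:
  fixes f :: "nat \<Rightarrow> linf"
  assumes "Cauchy f"
  shows "convergent f"
proof -
  from assms obtain g where "uniform_limit UNIV f g sequentially"
    using uniformly_convergent_eq_cauchy[of "\<lambda>_. True" f]
    unfolding Cauchy_def uniform_limit_sequentially_iff
    by (metis dist_fun_lt_imp_dist_val_lt)
  from uniform_limit_bcontfunE[OF this sequentially_bot]
  obtain l' where "g = apply_bcontfun l'" "(f \<longlonglongrightarrow> l')" by metis
  then show "convergent f"
    by (intro convergentI)
qed

lemma linf_Cauchy_uniformly_convergent:
  fixes f :: "nat \<Rightarrow> 'a \<Rightarrow> linf"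
  assumes "uniformly_Cauchy_on X f"
  shows   "uniformly_convergent_on X f"
unfolding uniformly_convergent_uniform_limit_iff uniform_limit_iff
proof safe
  let ?f = "\<lambda>x. lim (\<lambda>n. f n x)"
  fix e :: real assume e: "e > 0"
  hence "e/2 > 0" by simp
  with assms obtain N where N: "\<And>x m n. x \<in> X \<Longrightarrow> m \<ge> N \<Longrightarrow> n \<ge> N \<Longrightarrow> dist (f m x) (f n x) < e/2"
    unfolding uniformly_Cauchy_on_def by fast
  show "eventually (\<lambda>n. \<forall>x\<in>X. dist (f n x) (?f x) < e) sequentially"
    using eventually_ge_at_top[of N]
  proof eventually_elim
    fix n assume n: "n \<ge> N"
    show "\<forall>x\<in>X. dist (f n x) (?f x) < e"
    proof
      fix x assume x: "x \<in> X"
      with assms have "(\<lambda>n. f n x) \<longlonglongrightarrow> ?f x"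
        by (auto dest!: linf_Cauchy_convergent uniformly_Cauchy_imp_Cauchy simp: convergent_LIMSEQ_iff)
      with \<open>e/2 > 0\<close> have "eventually (\<lambda>m. m \<ge> N \<and> dist (f m x) (?f x) < e/2) sequentially"
        by (intro tendstoD eventually_conj eventually_ge_at_top)
      then obtain m where m: "m \<ge> N" "dist (f m x) (?f x) < e/2"
        unfolding eventually_at_top_linorder by blast
      have "dist (f n x) (?f x) \<le> dist (f n x) (f m x) + dist (f m x) (?f x)"
          by (rule dist_triangle)
      also from x n have "... < e/2 + e/2" by (intro add_strict_mono N m)
      finally show "dist (f n x) (?f x) < e" by simp
    qed
  qed
qed

theorem lemma2p7:
  fixes X :: "linf set" and K :: "nat \<Rightarrow> linf set"
    and M L \<Delta> :: real
    and p :: "nat \<Rightarrow> nat \<Rightarrow> linf" and n :: "nat \<Rightarrow> nat"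
  assumes X_complete: "complete X"
    and X_separable: "separable_space (top_of_set X)"
    and K_ne: "\<And>m. K m \<noteq> {}"
    and K_compact: "\<And>m. compact (K m)"
    and K_sub: "\<And>m. K m \<subseteq> X"
    and K_mono: "\<And>m m'. m \<le> m' \<Longrightarrow> K m \<subseteq> K m'"
    and pos: "M > 0" "L > 0" "\<Delta> > 0"
    and n_pos: "\<And>i. n i \<ge> 1"
    and p_in: "\<And>i k. k \<le> n i \<Longrightarrow> p i k \<in> X"
    and mesh: "(\<lambda>i. Mesh (p i) (n i)) \<longlonglongrightarrow> 0"
    and len: "\<And>i. Len (p i) (n i) \<le> L"
    and diam: "\<And>i. pdiam (p i) (n i) \<ge> \<Delta>"
    and hbound: "\<And>i. (\<Sum>k<n i. hfun K i (p i k) * dist (p i k) (p i (Suc k))) \<le> M"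
  shows "\<exists>r \<gamma>. strict_mono r \<and> continuous_on {0..1} \<gamma> \<and> \<gamma> ` {0..1} \<subseteq> X \<and>
           uniform_limit {0..1} (\<lambda>j. gammaP (p (r j)) (n (r j))) \<gamma> sequentially \<and>
           (\<lambda>j. Mesh (p (r j)) (n (r j))) \<longlonglongrightarrow> 0"
proof -
  define f where "f i = gammaP (p i) (n i)" for i
  have Lpos: "Len (p i) (n i) > 0" for i using pdiam_le_Len[of "p i" "n i"] diam[of i] pos by linarith
  have lip: "dist (f i s) (f i t) \<le> L * \<bar>s - t\<bar>" if "s \<in> {0..1}" "t \<in> {0..1}" for i s t
  proof -
    have "dist (f i s) (f i t) \<le> Len (p i) (n i) * \<bar>s - t\<bar>"
      unfolding f_def using that by (intro gammaP_lip[OF Lpos]) auto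
    also have "\<dots> \<le> L * \<bar>s - t\<bar>" using len[of i] by (intro mult_right_mono) auto
    finally show ?thesis .
  qed
  have near: "\<exists>k<n i. dist (f i t) (p i k) \<le> Mesh (p i) (n i)" if "t \<in> {0..1}" for i t
    using gammaP_near[OF Lpos, of t i] Mesh_ge[of _ "n i" "p i"] that unfolding f_def
    by (meson atLeastAtMost_iff order_trans)
  have TB: "\<exists>I F. finite F \<and> (\<forall>i\<ge>I. \<forall>t\<in>{0..1}. \<exists>c\<in>F. dist (f i t) c < e)" if e: "e > 0" for e
  proof -
    define \<epsilon> where "\<epsilon> = e / 6"
    have \<epsilon>: "\<epsilon> > 0" using e by (simp add: \<epsilon>_def)
    define \<mu> where "\<mu> = min \<Delta> \<epsilon>"
    have \<mu>: "\<mu> > 0" using \<epsilon> pos by (simp add: \<mu>_def)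
    obtain m0 :: nat where m0: "M / \<mu> < real m0" using reals_Archimedean2 by blast
    define m where "m = Suc m0"
    have m1: "1 \<le> m" by (simp add: m_def)
    have "M / \<mu> < real m" using m0 by (simp add: m_def)
    then have Mm: "M / real m < \<mu>" using \<mu> pos m1
      by (simp add: divide_less_eq mult.commute pos_divide_less_eq)
    define C where "C = K m"
    obtain F where F: "F \<subseteq> C" "finite F" "C \<subseteq> (\<Union>c\<in>F. ball c \<epsilon>)"
    proof (rule compactE_image[OF K_compact[of m], of C "\<lambda>x. ball x \<epsilon>"])
      show "K m \<subseteq> (\<Union>c\<in>C. ball c \<epsilon>)" using \<epsilon> unfolding C_def by force
    qed (auto simp: C_def)
    obtain I0 where I0: "\<And>i. i \<ge> I0 \<Longrightarrow> \<bar>Mesh (p i) (n i)\<bar> < \<epsilon>"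
      using mesh \<epsilon> unfolding LIMSEQ_def dist_real_def by fastforce
    define I where "I = max I0 (max m (nat \<lceil>1 / \<epsilon>\<rceil>))"
    show ?thesis
    proof (intro exI[of _ I] exI[of _ F] conjI F(2) allI impI ballI)
      fix i and t :: real assume i: "I \<le> i" and t: "t \<in> {0..1}"
      have mesh_i: "Mesh (p i) (n i) < \<epsilon>" using I0[of i] i by (simp add: I_def)
      have mi: "m \<le> i" using i by (simp add: I_def)
      have "1 / \<epsilon> \<le> real i" using i unfolding I_def by linarith
      then have ie: "1 \<le> real i * \<epsilon>" using \<epsilon> by (simp add: field_simps)
      have tk: "infdist (p i k) C \<le> \<epsilon> + Mesh (p i) (n i) + M / real m" if "k \<le> n i" for k
      proof (rule tight[where h = "\<lambda>k. hfun K i (p i k)"])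
        show "0 < real m" using m1 by simp
        show "0 \<le> hfun K i (p i k)" for k unfolding hfun_def by (intro sum_nonneg) (auto simp: infdist_nonneg)
        show "real m \<le> hfun K i (p i k)" if "\<epsilon> \<le> infdist (p i k) C" for k
          using hfun_ge[where K=K, OF m1 mi K_mono K_ne ie] that unfolding C_def by blast
        show "(\<Sum>k<n i. hfun K i (p i k) * dist (p i k) (p i (Suc k))) \<le> M" by (rule hbound)
        show "M / real m < Len (p i) (n i)"
          using Mm pdiam_le_Len[of "p i" "n i"] diam[of i] unfolding \<mu>_def by linarith
      qed (use that in auto)
      obtain k where k: "k < n i" "dist (f i t) (p i k) \<le> Mesh (p i) (n i)" using near[OF t] by blast
      have "infdist (f i t) C \<le> infdist (p i k) C + dist (f i t) (p i k)" by (rule infdist_triangle)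
      also have "\<dots> < 4 * \<epsilon>" using tk[of k] k mesh_i Mm unfolding \<mu>_def by linarith
      finally obtain c where c: "c \<in> C" "dist (f i t) c < 4 * \<epsilon>"
        using infdist_lessE[of C] K_ne unfolding C_def by blast
      then obtain c' where c': "c' \<in> F" "dist c' c < \<epsilon>" using F(3) by auto
      have "dist (f i t) c' < 5 * \<epsilon>" using c c' dist_triangle[of "f i t" c' c] by (simp add: dist_commute)
      then show "\<exists>c\<in>F. dist (f i t) c < e" using c'(1) \<epsilon> unfolding \<epsilon>_def by force
    qed
  qed
  have colex: "\<exists>col :: nat \<Rightarrow> (nat \<Rightarrow> linf) option. finite (range col) \<and>
     (\<exists>I. \<forall>i\<ge>I. \<forall>i'\<ge>I. col i = col i' \<longrightarrow> (\<forall>t\<in>{0..1}. dist (f i t) (f i' t) \<le> 1 / Suc m))" for m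
  proof -
    define e where "e = 1 / (4 * real (Suc m))"
    have e: "e > 0" by (simp add: e_def)
    obtain I F where F: "finite F" and IF: "\<And>i t. i \<ge> I \<Longrightarrow> t \<in> {0..1} \<Longrightarrow> \<exists>c\<in>F. dist (f i t) c < e"
      using TB[OF e] by blast
    define N where "N = Suc (nat \<lceil>4 * L * Suc m\<rceil>)"
    have Npos: "N > 0" by (simp add: N_def)
    have NL: "4 * L * Suc m \<le> real N" unfolding N_def by linarith
    have LN: "L / real N \<le> e"
    proof -
      have "L / real N \<le> L / (4 * L * Suc m)"
        using pos NL Npos by (intro divide_left_mono) (auto intro!: mult_pos_pos)
      also have "\<dots> = e" using pos by (simp add: e_def)
      finally show ?thesis .
    qed
    define sel where "sel i j = (SOME c. c \<in> F \<and> dist (f i (real j / real N)) c < e)" for i j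
    have selp: "sel i j \<in> F \<and> dist (f i (real j / real N)) (sel i j) < e" if "i \<ge> I" "j \<le> N" for i j
    proof -
      have "real j / real N \<in> {0..1}" using that Npos by auto
      then have "\<exists>c. c \<in> F \<and> dist (f i (real j / real N)) c < e" using IF[OF that(1)] by blast
      then show ?thesis unfolding sel_def by (rule someI_ex)
    qed
    define col where "col i = (if I \<le> i then Some (restrict (sel i) {..N}) else None)" for i
    have "range col \<subseteq> insert None (Some ` (Pi\<^sub>E {..N} (\<lambda>_. F)))"
      using selp by (auto simp: col_def restrict_PiE_iff)
    then have fin: "finite (range col)"
      by (rule finite_subset) (simp add: F finite_PiE)
    have cl: "dist (f i t) (f i' t) \<le> 1 / Suc m"
      if i: "i \<ge> I" "i' \<ge> I" and eq: "col i = col i'" and t: "t \<in> {0..1}" for i i' t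
    proof -
      obtain j where j: "j \<le> N" "\<bar>t - real j / real N\<bar> \<le> 1 / real N" using grid[of t N] t Npos by auto
      have sj: "sel i j = sel i' j" using eq i j(1) unfolding col_def by (metis option.inject restrict_apply' atMost_iff)
      have jt: "real j / real N \<in> {0..1}" using j Npos by auto
      have d1: "dist (f i t) (f i (real j / real N)) \<le> e"
      proof -
        have "dist (f i t) (f i (real j / real N)) \<le> L * \<bar>t - real j / real N\<bar>" by (rule lip[OF t jt])
        also have "\<dots> \<le> L * (1 / real N)" using pos j by (intro mult_left_mono) auto
        finally show ?thesis using LN by simp
      qed
      have d2: "dist (f i' t) (f i' (real j / real N)) \<le> e"
      proof -
        have "dist (f i' t) (f i' (real j / real N)) \<le> L * \<bar>t - real j / real N\<bar>" by (rule lip[OF t jt])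
        also have "\<dots> \<le> L * (1 / real N)" using pos j by (intro mult_left_mono) auto
        finally show ?thesis using LN by simp
      qed
      have d3: "dist (f i (real j / real N)) (sel i j) < e" using selp[OF i(1) j(1)] by blast
      have d4: "dist (f i' (real j / real N)) (sel i j) < e" using selp[OF i(2) j(1)] sj by simp
      have "dist (f i t) (f i' t) \<le> dist (f i t) (f i (real j / real N)) + dist (f i (real j / real N)) (sel i j)
          + dist (f i' (real j / real N)) (sel i j) + dist (f i' t) (f i' (real j / real N))"
        using dist_triangle[of "f i t" "f i' t" "f i (real j / real N)"]
          dist_triangle[of "f i (real j / real N)" "f i' t" "sel i j"]
          dist_triangle[of "sel i j" "f i' t" "f i' (real j / real N)"]
        by (simp add: dist_commute)
      also have "\<dots> \<le> 4 * e" using d1 d2 d3 d4 by linarith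
      also have "\<dots> = 1 / Suc m" by (simp add: e_def field_simps)
      finally show ?thesis .
    qed
    show ?thesis using fin cl by blast
  qed
  then have "\<forall>m. \<exists>col :: nat \<Rightarrow> (nat \<Rightarrow> linf) option. finite (range col) \<and>
     (\<exists>I. \<forall>i\<ge>I. \<forall>i'\<ge>I. col i = col i' \<longrightarrow> (\<forall>t\<in>{0..1}. dist (f i t) (f i' t) \<le> 1 / Suc m))" by blast
  from choice[OF this] obtain col :: "nat \<Rightarrow> nat \<Rightarrow> (nat \<Rightarrow> linf) option" where
    col: "\<forall>m. finite (range (col m)) \<and> (\<exists>I. \<forall>i\<ge>I. \<forall>i'\<ge>I. col m i = col m i' \<longrightarrow> (\<forall>t\<in>{0..1}. dist (f i t) (f i' t) \<le> 1 / Suc m))"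
    by (rule exE)
  have col1: "\<And>m. finite (range (col m))" using col by blast
  have col2: "\<And>m. \<exists>I. \<forall>i\<ge>I. \<forall>i'\<ge>I. col m i = col m i' \<longrightarrow> (\<forall>t\<in>{0..1}. dist (f i t) (f i' t) \<le> 1 / Suc m)"
    using col by blast
  obtain r where r: "strict_mono r" "uniformly_Cauchy_on {0..1} (\<lambda>j. f (r j))"
    using coloring_subseq[where f=f and col=col and S="{0..1::real}", OF col1 col2] by (elim exE conjE)
  define \<gamma> where "\<gamma> = (\<lambda>x. lim (\<lambda>j. f (r j) x))"
  have ul: "uniform_limit {0..1} (\<lambda>j. f (r j)) \<gamma> sequentially"
    using linf_Cauchy_uniformly_convergent[OF r(2)] unfolding uniformly_convergent_uniform_limit_iff \<gamma>_def .
  have cont_f: "continuous_on {0..1} (f i)" for i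
  proof (rule lipschitz_on_continuous_on)
    show "L-lipschitz_on {0..1} (f i)" using lip pos by (intro lipschitz_onI) (auto simp: dist_real_def)
  qed
  have cont: "continuous_on {0..1} \<gamma>"
    by (rule uniform_limit_theorem[OF _ ul]) (auto simp: cont_f)
  have closedX: "closed X" by (rule complete_imp_closed[OF X_complete])
  have meshr: "(\<lambda>j. Mesh (p (r j)) (n (r j))) \<longlonglongrightarrow> 0"
    using LIMSEQ_subseq_LIMSEQ[OF mesh r(1)] by (simp add: o_def)
  have img: "\<gamma> t \<in> X" if t: "t \<in> {0..1}" for t
  proof -
    have conv: "(\<lambda>j. f (r j) t) \<longlonglongrightarrow> \<gamma> t" by (rule tendsto_uniform_limitI[OF ul t])
    have "\<forall>j. \<exists>k. k < n (r j) \<and> dist (f (r j) t) (p (r j) k) \<le> Mesh (p (r j)) (n (r j))"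
      using near[OF t] by blast
    then obtain kk where kk: "\<And>j. kk j < n (r j) \<and> dist (f (r j) t) (p (r j) (kk j)) \<le> Mesh (p (r j)) (n (r j))"
      by (rule choice[THEN exE]) blast
    define x where "x j = p (r j) (kk j)" for j
    have xX: "x j \<in> X" for j unfolding x_def using kk[of j] p_in by simp
    have "(\<lambda>j. dist (x j) (\<gamma> t)) \<longlonglongrightarrow> 0"
    proof (rule tendsto_sandwich[of "\<lambda>_. 0" _ _ "\<lambda>j. Mesh (p (r j)) (n (r j)) + dist (f (r j) t) (\<gamma> t)"])
      show "\<forall>\<^sub>F j in sequentially. 0 \<le> dist (x j) (\<gamma> t)" by simp
      show "\<forall>\<^sub>F j in sequentially. dist (x j) (\<gamma> t) \<le> Mesh (p (r j)) (n (r j)) + dist (f (r j) t) (\<gamma> t)"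
      proof (intro always_eventually allI)
        fix j
        have "dist (x j) (\<gamma> t) \<le> dist (x j) (f (r j) t) + dist (f (r j) t) (\<gamma> t)" by (rule dist_triangle)
        moreover have "dist (x j) (f (r j) t) \<le> Mesh (p (r j)) (n (r j))"
          using kk[of j] unfolding x_def by (simp add: dist_commute)
        ultimately show "dist (x j) (\<gamma> t) \<le> Mesh (p (r j)) (n (r j)) + dist (f (r j) t) (\<gamma> t)" by linarith
      qed
      show "(\<lambda>_. 0) \<longlonglongrightarrow> (0::real)" by simp
      have "(\<lambda>j. dist (f (r j) t) (\<gamma> t)) \<longlonglongrightarrow> 0" using conv by (rule tendsto_dist_iff[THEN iffD1])
      then show "(\<lambda>j. Mesh (p (r j)) (n (r j)) + dist (f (r j) t) (\<gamma> t)) \<longlonglongrightarrow> 0"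
      proof -
        have "(\<lambda>j. Mesh (p (r j)) (n (r j)) + dist (f (r j) t) (\<gamma> t)) \<longlonglongrightarrow> 0 + 0"
          by (rule tendsto_add[OF meshr \<open>(\<lambda>j. dist (f (r j) t) (\<gamma> t)) \<longlonglongrightarrow> 0\<close>])
        then show ?thesis by simp
      qed
    qed
    then have "x \<longlonglongrightarrow> \<gamma> t" by (rule tendsto_dist_iff[THEN iffD2])
    then show ?thesis by (rule closed_sequentially[where f=x, OF closedX xX])
  qed
  have ul': "uniform_limit {0..1} (\<lambda>j. gammaP (p (r j)) (n (r j))) \<gamma> sequentially"
    using ul by (simp add: f_def)
  have img': "\<gamma> ` {0..1} \<subseteq> X" using img by (intro image_subsetI)
  show ?thesis
    by (intro exI[of _ r] exI[of _ \<gamma>] conjI r(1) cont img' ul' meshr)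
qed

end
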